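(* Let $q$ be a prime power, $m\ge2$ an integer, $n=q^m-1$, and $\delta_{\max}=q^{\lceil m/2\rceil}-1-(q-2)[m\text{ odd}]$. If $2\le\delta\le\delta_{\max}$, then the Euclidean dual code $C^\perp$ of $C=\mathcal{BCH}(n,q;\delta)$ has minimum distance $d^\perp\ge\delta_{\max}+1$.
   Context: Let $\alpha$ be a primitive element of $\mathbf{F}_{q^m}$ and $n=q^m-1$; $C_x=\{xq^k\bmod n\mid k\in\mathbf{Z}\}$. For $2\le\delta\le n$, $\mathcal{BCH}(n,q;\delta)$ is the cyclic code of length $n$ over $\mathbf{F}_q$ with generator polynomial $\prod_{z\in Z}(x-\alpha^z)$, where $Z=C_1\cup\cdots\cup C_{\delta-1}$. $C^\perp=\{y\in\mathbf{F}_q^n\mid x\cdot y=0\ \forall x\in C\}$. Iverson notation: $[P]=1$ if $P$ holds, $0$ otherwise. *)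

theory Defs
  imports "HOL-Computational_Algebra.Polynomial"
begin

definition field_emb :: "('a::field \<Rightarrow> 'b::field) \<Rightarrow> bool" where
  "field_emb e \<longleftrightarrow> e 1 = 1 \<and> (\<forall>x y. e (x + y) = e x + e y \<and> e (x * y) = e x * e y)"

definition primitive_elem :: "'b::field \<Rightarrow> bool" where
  "primitive_elem a \<longleftrightarrow> a \<noteq> 0 \<and> (\<forall>x. x \<noteq> 0 \<longrightarrow> (\<exists>k::nat. a ^ k = x))"

definition cyc_coset :: "nat \<Rightarrow> nat \<Rightarrow> nat \<Rightarrow> nat set" where
  "cyc_coset q n x = {x * q ^ k mod n | k. True}"

definition vecs :: "nat \<Rightarrow> (nat \<Rightarrow> 'a::zero) set" where
  "vecs n = {v. \<forall>i\<ge>n. v i = 0}"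

definition vec_poly :: "('a \<Rightarrow> 'b::zero) \<Rightarrow> nat \<Rightarrow> (nat \<Rightarrow> 'a) \<Rightarrow> 'b poly" where
  "vec_poly e n c = Poly (map (\<lambda>i. e (c i)) [0..<n])"

definition bch_gen :: "nat \<Rightarrow> 'b::field \<Rightarrow> nat \<Rightarrow> nat \<Rightarrow> 'b poly" where
  "bch_gen q \<alpha> n \<delta> = (\<Prod>z\<in>(\<Union>i\<in>{1..\<delta>-1}. cyc_coset q n i). [:- (\<alpha> ^ z), 1:])"

definition bch_code :: "('a::field \<Rightarrow> 'b::field) \<Rightarrow> nat \<Rightarrow> 'b \<Rightarrow> nat \<Rightarrow> nat \<Rightarrow> (nat \<Rightarrow> 'a) set" where
  "bch_code e q \<alpha> n \<delta> = {c \<in> vecs n. bch_gen q \<alpha> n \<delta> dvd vec_poly e n c}"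

definition dual_code :: "nat \<Rightarrow> (nat \<Rightarrow> 'a::comm_ring) set \<Rightarrow> (nat \<Rightarrow> 'a) set" where
  "dual_code n C = {y \<in> vecs n. \<forall>x\<in>C. (\<Sum>i<n. x i * y i) = 0}"

definition hamming_dist :: "nat \<Rightarrow> (nat \<Rightarrow> 'a) \<Rightarrow> (nat \<Rightarrow> 'a) \<Rightarrow> nat" where
  "hamming_dist n x y = card {i \<in> {0..<n}. x i \<noteq> y i}"

definition min_dist_ge :: "nat \<Rightarrow> (nat \<Rightarrow> 'a) set \<Rightarrow> nat \<Rightarrow> bool" where
  "min_dist_ge n C d \<longleftrightarrow> (\<forall>x\<in>C. \<forall>y\<in>C. x \<noteq> y \<longrightarrow> hamming_dist n x y \<ge> d)"

definition delta_max :: "nat \<Rightarrow> nat \<Rightarrow> nat" where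
  "delta_max q m = q ^ ((m + 1) div 2) - 1 - (if odd m then q - 2 else 0)"

end

theory Submission
  imports Defs "HOL-Computational_Algebra.Primes" "HOL-Number_Theory.Cong"
begin

lemma delta_shape:
  fixes q m :: nat
  assumes q: "q \<ge> 2" and m: "m \<ge> 2"
  obtains h where "m = 2*h" "h \<ge> 1" "delta_max q m = q^h - 1"
   | h where "m = 2*h - 1" "h \<ge> 2" "delta_max q m = q^h - q + 1"
proof (cases "even m")
  case True
  then obtain h where h: "m = 2*h" by blast
  have hd: "(m+1) div 2 = h" using h by simp
  have "delta_max q m = q^h - 1" unfolding delta_max_def hd using True by simp
  then show ?thesis using that(1)[of h] h m by linarith
next
  case False
  define h where "h = (m+1) div 2"
  have h: "m = 2*h - 1" "h \<ge> 1" using False m unfolding h_def by presburger+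
  hence h2: "h \<ge> 2" using m by auto
  have hd: "(m+1) div 2 = h" using h by auto
  have "q^h \<ge> q^1" using h2 q by (intro power_increasing) auto
  hence "q^h - 1 - (q-2) = q^h - q + 1" using q by auto
  hence "delta_max q m = q^h - q + 1" unfolding delta_max_def hd using False by simp
  then show ?thesis using that(2)[of h] h h2 by blast
qed

lemma le_times_pow: "(q::nat) \<ge> 1 \<Longrightarrow> x \<le> x * q^k"
  using mult_le_mono2[OF one_le_power[of q k], of x] by simp

lemma shape_facts:
  fixes q m :: nat
  assumes q: "q \<ge> 2" and m: "m \<ge> 2"
  obtains h where "1 \<le> delta_max q m" "delta_max q m \<le> q^h" "h + 1 \<le> m" "m \<le> 2*h" "2*h \<le> m + 1"
    "(delta_max q m - 1) * q^(m-h) + delta_max q m \<le> q^m - 1"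
    "\<And>a j. m - h < j \<Longrightarrow> j < m \<Longrightarrow> (a+1) * q^(m-j) \<le> delta_max q m \<Longrightarrow> a + delta_max q m + 1 \<le> q^j"
proof -
  have q1: "q \<ge> 1" using q by simp
  show ?thesis
  proof (cases rule: delta_shape[OF q m])
    case (1 h)
    define H where "H = q^h"
    have H2: "H \<ge> 2" unfolding H_def using q 1(2)
      by (metis power_one_right power_increasing q1 order_trans)
    have qm: "q^m = H*H" unfolding H_def 1(1) by (simp add: power_add mult_2 flip: power_add)
    have mh: "m - h = h" using 1 by simp
    have F3: "(delta_max q m - 1) * q^(m-h) + delta_max q m \<le> q^m - 1"
    proof -
      have "2 * H \<le> H * H" by (rule mult_le_mono1[OF H2])
      hence a: "H + H \<le> H * H" by (simp only: mult_2)
      show ?thesis unfolding mh qm 1(3) H_def[symmetric] using H2 a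
        by (simp add: diff_mult_distrib)
    qed
    have F5: "a + delta_max q m + 1 \<le> q^j" if "m - h < j" "j < m" "(a+1) * q^(m-j) \<le> delta_max q m" for a j
    proof -
      have "a + 1 \<le> (a+1) * q^(m-j)" using q by (intro le_times_pow) simp
      hence "a + 1 \<le> H - 1" using that(3) 1(3) H_def by simp
      moreover have "q^(h+1) \<le> q^j" using that q 1 by (intro power_increasing) auto
      moreover have "q^(h+1) = q * H" unfolding H_def by simp
      moreover have "2 * H \<le> q * H" using q by simp
      ultimately show ?thesis using 1(3) H_def by linarith
    qed
    show ?thesis
    proof (rule that[of h])
      show "1 \<le> delta_max q m" using 1(3) H2 H_def by simp
      show "delta_max q m \<le> q^h" using 1(3) by simp
    qed (use 1 F3 F5 in auto)
  next
    case (2 h)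
    define P where "P = q^(h-1)"
    have P1: "P \<ge> 1" unfolding P_def using q by simp
    have H: "q^h = q * P"
    proof -
      have "h = Suc (h-1)" using 2(2) by simp
      hence "q^h = q^Suc(h-1)" by (rule arg_cong)
      thus ?thesis unfolding P_def by simp
    qed
    have qm: "q^m = q * P * P"
    proof -
      have "m = h + (h-1)" using 2 by simp
      hence "q^m = q^h * q^(h-1)" by (simp add: power_add)
      thus ?thesis using H P_def by simp
    qed
    have mh: "m - h = h - 1" using 2 by simp
    have qP: "q \<le> q * P" using P1 by simp
    have F3: "(delta_max q m - 1) * q^(m-h) + delta_max q m \<le> q^m - 1"
    proof -
      have a: "q * P \<le> q * P * P" using P1 by simp
      have b: "q \<le> q * P * P" using qP a by linarith
      show ?thesis unfolding mh qm 2(3) H P_def[symmetric] using q qP a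
        by (simp add: diff_mult_distrib) (use b q in linarith)
    qed
    have F5: "a + delta_max q m + 1 \<le> q^j" if "m - h < j" "j < m" "(a+1) * q^(m-j) \<le> delta_max q m" for a j
    proof (cases "j = h")
      case True
      have "m - j = h - 1" using True 2 by simp
      hence "(a+1) * P \<le> q * P - q + 1" using that(3) 2(3) H P_def by simp
      also have "\<dots> < q * P" using q qP by linarith
      finally have "(a + 1) * P < q * P" .
      hence "a + 1 < q" by (rule mult_less_cancel2[THEN iffD1, THEN conjunct2])
      hence "a + (q*P - q + 1) + 1 \<le> q*P" using qP by linarith
      thus ?thesis using True 2(3) H by simp
    next
      case False
      hence "j \<ge> h + 1" using that 2 by simp
      have "a + 1 \<le> (a+1) * q^(m-j)" using q by (intro le_times_pow) simp
      moreover have "(a+1) * q^(m-j) \<le> q * P - q + 1" using that(3) 2(3) H by simp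
      ultimately have "a + 1 \<le> q * P" using qP q by linarith
      moreover have "q^(h+1) \<le> q^j" using \<open>j \<ge> h+1\<close> q by (intro power_increasing) auto
      moreover have "q^(h+1) = q * (q * P)" using H by simp
      moreover have "2 * (q*P) \<le> q * (q * P)" using q by simp
      ultimately show ?thesis using 2(3) H qP q by linarith
    qed
    show ?thesis
    proof (rule that[of h])
      show "1 \<le> delta_max q m" using 2(3) by simp
      show "delta_max q m \<le> q^h" using 2(3) H qP q by linarith
    qed (use 2 F3 F5 in auto)
  qed
qed

lemma nt_core:
  fixes q m s i j :: nat
  assumes q: "q \<ge> 2" and m: "m \<ge> 2" and s: "s < delta_max q m"
    and i: "1 \<le> i" "i < delta_max q m" and j: "j < m"
  shows "\<not> (q^m - 1) dvd (s * q^j + i)"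
proof
  assume dv: "(q^m - 1) dvd (s * q^j + i)"
  obtain h where F: "1 \<le> delta_max q m" "delta_max q m \<le> q^h" "h + 1 \<le> m" "m \<le> 2*h" "2*h \<le> m + 1"
    "(delta_max q m - 1) * q^(m-h) + delta_max q m \<le> q^m - 1"
    "\<And>a j. m - h < j \<Longrightarrow> j < m \<Longrightarrow> (a+1) * q^(m-j) \<le> delta_max q m \<Longrightarrow> a + delta_max q m + 1 \<le> q^j"
    using shape_facts[OF q m] by blast
  define D where "D = delta_max q m"
  define n where "n = q^m - 1"
  have q1: "q \<ge> 1" using q by simp
  have qm1: "q^m \<ge> 1" using q1 by simp
  have key: "\<exists>r a. s*q^j = r + a*n \<and> r + D \<le> n"
  proof (cases "j = 0 \<or> j \<le> m - h")
    case True
    have "s*q^j + D \<le> n"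
    proof (cases "j = 0")
      case True
      have "q^h * 2 \<le> q^h * q" using q by (intro mult_le_mono2) 
      also have "\<dots> = q^(h+1)" by simp
      also have "\<dots> \<le> q^m" using F(3) q1 by (intro power_increasing) auto
      finally show ?thesis using True s F(2) unfolding D_def n_def by simp
    next
      case False
      hence jj: "j \<le> m - h" using True by simp
      have "s * q^j \<le> (D-1) * q^j" using s D_def by (intro mult_le_mono1) linarith
      also have "\<dots> \<le> (D-1) * q^(m-h)" using jj q1 by (intro mult_le_mono2 power_increasing) auto
      finally show ?thesis using F(6) unfolding D_def n_def by linarith
    qed
    thus ?thesis by (intro exI[of _ "s*q^j"] exI[of _ 0]) simp
  next
    case False
    hence jg: "m - h < j" by simp
    define t where "t = m - j"
    define T where "T = q^t"
    define X where "X = q^j"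
    have TX: "T * X = q^m" unfolding T_def X_def t_def using j by (simp flip: power_add)
    have th: "t \<le> h" using jg j unfolding t_def by linarith
    have hj: "h \<le> j" using jg F(5) by linarith
    define a where "a = s div T"
    define c where "c = s mod T"
    have sd: "s = a * T + c" unfolding a_def c_def by simp
    have T1: "T \<ge> 1" unfolding T_def using q1 by simp
    have cT: "c < T" unfolding c_def using T1 by simp
    have sX: "s * q^j = (a + c*X) + a * n"
    proof -
      have e1: "s * q^j = a * (T*X) + c * X" unfolding sd X_def by (simp add: algebra_simps)
      have "q^m = n + 1" unfolding n_def using qm1 by simp
      hence "a * (T*X) + c * X = a * (n+1) + c * X" unfolding TX by simp
      with e1 show ?thesis by (simp add: algebra_simps)
    qed
    have "q^h = q^(h-t) * T" unfolding T_def using th by (simp flip: power_add)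
    hence "s < q^(h-t) * T" using s F(2) by simp
    hence aA: "a < q^(h-t)" unfolding a_def by (rule less_mult_imp_div_less)
    have AX: "q^(h-t) \<le> X" unfolding X_def using q1 hj by (intro power_increasing) auto
    have DX: "D \<le> X" unfolding X_def D_def using F(2) q1 hj
      by (meson order_trans power_increasing)
    have "(a + c*X) + D \<le> n"
    proof (cases "c + 2 \<le> T")
      case True
      have "(c + 2) * X \<le> T * X" using True by (rule mult_le_mono1)
      thus ?thesis using aA AX DX unfolding n_def TX[symmetric] by (simp add: algebra_simps)
    next
      case False
      hence cT1: "c + 1 = T" using cT by simp
      have "(a+1) * T = s + 1" using sd cT1 by (simp add: algebra_simps)
      hence "(a+1) * q^(m-j) \<le> delta_max q m" using s T_def t_def by simp
      from F(7)[OF jg j this] have aD: "a + D + 1 \<le> X" unfolding D_def X_def .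
      have "c * X + X = T * X" using cT1 by (metis add_mult_distrib mult_1)
      thus ?thesis using aD unfolding n_def TX[symmetric] by linarith
    qed
    thus ?thesis using sX by blast
  qed
  then obtain r a where ra: "s*q^j = r + a*n" "r + D \<le> n" by blast
  have "n dvd (r + i) + a * n" using dv ra(1) unfolding n_def by (simp add: algebra_simps)
  hence "n dvd r + i" by (simp add: dvd_add_left_iff)
  moreover have "r + i < n" using ra(2) i unfolding D_def by linarith
  moreover have "0 < r + i" using i by simp
  ultimately show False using nat_dvd_not_less by blast
qed

lemma pow_cong_mod:
  fixes q m x :: nat
  assumes "q^m \<ge> 1"
  shows "[q^x = q^(x mod m)] (mod (q^m - 1))"
proof -
  let ?n = "q^m - 1"
  have c1: "[q^m = 1] (mod ?n)"
  proof -
    have "q^m = ?n + 1" using assms by simp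
    thus ?thesis by (metis cong_def mod_add_self1 add.commute)
  qed
  have "[(q^m)^(x div m) = 1^(x div m)] (mod ?n)" by (rule cong_pow[OF c1])
  hence "[q^(x mod m) * (q^m)^(x div m) = q^(x mod m) * 1] (mod ?n)"
    by (intro cong_mult cong_refl) simp
  moreover have "q^(x mod m) * (q^m)^(x div m) = q^x"
    by (metis power_mult power_add mod_mult_div_eq)
  ultimately show ?thesis by simp
qed

lemma nt_coset:
  fixes q m s i l j :: nat
  assumes q: "q \<ge> 2" and m: "m \<ge> 2" and s: "s < delta_max q m"
    and i: "1 \<le> i" "i < delta_max q m"
  shows "\<not> (q^m - 1) dvd (s * q^j + (i * q^l) mod (q^m - 1))"
proof
  let ?n = "q^m - 1"
  have qm1: "q^m \<ge> 1" using q by simp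
  assume "?n dvd (s * q^j + (i * q^l) mod ?n)"
  hence "[s * q^j + (i * q^l) mod ?n = 0] (mod ?n)" by (simp add: cong_0_iff)
  hence "[s * q^j + i * q^l = 0] (mod ?n)"
    by (metis cong_def mod_add_right_eq)
  hence "[(s * q^j + i * q^l) * q^((m-1)*l) = 0 * q^((m-1)*l)] (mod ?n)"
    by (rule cong_scalar_right)
  moreover have "(s * q^j + i * q^l) * q^((m-1)*l) = s * q^(j + ((m-1)*l)) + i * q^(m*l)"
  proof -
    have "l + (m-1)*l = m*l" using m by (cases m) auto
    thus ?thesis by (simp add: algebra_simps power_add flip: power_add)
  qed
  ultimately have c: "[s * q^(j + ((m-1)*l)) + i * q^(m*l) = 0] (mod ?n)" by simp
  have "[s * q^(j + ((m-1)*l)) + i * q^(m*l) = s * q^((j + ((m-1)*l)) mod m) + i * q^((m*l) mod m)] (mod ?n)"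
    by (intro cong_add cong_scalar_left pow_cong_mod qm1)
  hence "[s * q^((j + ((m-1)*l)) mod m) + i = 0] (mod ?n)"
    using c by (simp add: cong_sym_eq) (metis cong_sym cong_trans)
  hence "?n dvd s * q^((j + ((m-1)*l)) mod m) + i" by (simp add: cong_0_iff)
  moreover have "(j + ((m-1)*l)) mod m < m" using m by simp
  ultimately show False using nt_core[OF q m s i] by blast
qed

lemma fin_field_pow_card:
  fixes x :: "'c :: {finite,field}"
  shows "x ^ card (UNIV :: 'c set) = x"
proof (cases "x = 0")
  case False
  have "x * (\<Prod>y\<in>UNIV-{0}. x * y) = x * x ^ (card (UNIV :: 'c set) - 1) * \<Prod>(UNIV-{0})"
    by (simp add: prod.distrib mult_ac)
  also have "x * x ^ (card (UNIV :: 'c set) - 1) = x ^ Suc (card (UNIV :: 'c set) - 1)"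
    by (subst power_Suc) auto
  also have "Suc (card (UNIV :: 'c set) - 1) = card (UNIV :: 'c set)"
    using finite_UNIV_card_ge_0[where ?'a = 'c] by simp
  also have "(\<Prod>y\<in>UNIV-{0}. x * y) = (\<Prod>y\<in>UNIV-{0}. y)"
    by (rule prod.reindex_bij_witness[of _ "\<lambda>y. y / x" "\<lambda>y. x * y"]) (use False in auto)
  finally show ?thesis
    by simp
qed (use finite_UNIV_card_ge_0[where ?'a = 'c] in auto)

lemma fin_field_prime_char: "prime CHAR('c :: {finite,field})"
  using prime_CHAR_semidom[where ?'a = 'c] finite_imp_CHAR_pos[OF finite_UNIV[where 'a='c]] by simp

lemma of_nat_mod_CHAR': "(of_nat (x mod CHAR('c)) :: 'c :: semiring_1) = of_nat x"
proof -
  have "x = x mod CHAR('c) + CHAR('c) * (x div CHAR('c))" by simp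
  hence "(of_nat x :: 'c) = of_nat (x mod CHAR('c)) + of_nat CHAR('c) * of_nat (x div CHAR('c))"
    by (metis of_nat_add of_nat_mult)
  thus ?thesis by simp
qed

definition addsub :: "'c::ab_group_add set \<Rightarrow> bool" where
  "addsub H \<longleftrightarrow> 0 \<in> H \<and> (\<forall>x\<in>H. \<forall>y\<in>H. x + y \<in> H) \<and> (\<forall>x\<in>H. -x \<in> H)"

lemma addsub_of_nat: "addsub H \<Longrightarrow> h \<in> H \<Longrightarrow> (of_nat d :: 'c::ring_1) * h \<in> H"
  by (induction d) (auto simp: addsub_def algebra_simps)

lemma addsub_ext_inj:
  fixes a :: "'c :: {finite,field}"
  assumes H: "addsub H" and aH: "a \<notin> H" and cc: "c' < c" "c < CHAR('c)"
    and hh: "h \<in> H" "h' \<in> H" and eq: "of_nat c * a + h = of_nat c' * a + h'"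
  shows False
proof -
  let ?p = "CHAR('c)"
  have pp: "prime ?p" by (rule fin_field_prime_char)
  have "of_nat (c - c') * a = h' - h" using eq cc by (simp add: of_nat_diff algebra_simps)
  also have "h' - h \<in> H" using H hh unfolding addsub_def by (metis diff_conv_add_uminus)
  finally have d: "of_nat (c - c') * a \<in> H" .
  have "coprime (c - c') ?p"
    using cc pp by (metis coprime_commute diff_less_Suc less_Suc_eq_le nat_dvd_not_less prime_imp_coprime zero_less_diff diff_le_self le_less_trans)
  hence g: "gcd (c - c') ?p = 1" by simp
  obtain x y where xy: "(c - c') * x = ?p * y + gcd (c - c') ?p"
    using bezout_nat[of "c - c'" ?p] cc by auto
  have "(of_nat ((c - c') * x) :: 'c) = of_nat (?p * y + 1)" using xy g by simp
  also have "\<dots> = 1" by simp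
  finally have "(of_nat x :: 'c) * of_nat (c - c') = 1" by (simp only: of_nat_mult mult.commute)
  hence "a = of_nat x * (of_nat (c - c') * a)" by (simp flip: mult.assoc)
  also have "\<dots> \<in> H" by (rule addsub_of_nat[OF H d])
  finally show False using aH by simp
qed

lemma addsub_ext:
  fixes a :: "'c :: {finite,field}"
  assumes H: "addsub H" and aH: "a \<notin> H"
  defines "H' \<equiv> (\<lambda>(c,h). of_nat c * a + h) ` ({..<CHAR('c)} \<times> H)"
  shows "addsub H'" "card H' = CHAR('c) * card H"
proof -
  let ?p = "CHAR('c)"
  have pp: "prime ?p" by (rule fin_field_prime_char)
  have mem: "of_nat c * a + h \<in> H'" if "h \<in> H" for c h
  proof -
    have "of_nat c * a + h = of_nat (c mod ?p) * a + h" by (simp add: of_nat_mod_CHAR')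
    moreover have "c mod ?p < ?p" using pp prime_gt_0_nat by simp
    ultimately show ?thesis unfolding H'_def using that by force
  qed
  show "addsub H'"
    unfolding addsub_def
  proof (intro conjI ballI)
    show "0 \<in> H'" using mem[of 0 0] H by (simp add: addsub_def)
  next
    fix x y assume "x \<in> H'" "y \<in> H'"
    then obtain c h c' h' where "x = of_nat c * a + h" "y = of_nat c' * a + h'" "h \<in> H" "h' \<in> H"
      unfolding H'_def by auto
    moreover have "h + h' \<in> H" using H \<open>h \<in> H\<close> \<open>h' \<in> H\<close> by (simp add: addsub_def)
    ultimately show "x + y \<in> H'" using mem[of "h + h'" "c + c'"] by (simp add: algebra_simps)
  next
    fix x assume "x \<in> H'"
    then obtain c h where c: "x = of_nat c * a + h" "h \<in> H" "c < ?p"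
      unfolding H'_def by auto
    have "-h \<in> H" using H c(2) by (simp add: addsub_def)
    moreover have "(of_nat (?p - c) :: 'c) = - of_nat c" using c(3) by (simp add: of_nat_diff)
    ultimately show "-x \<in> H'" using mem[of "-h" "?p - c"] c(1) by (simp add: algebra_simps)
  qed
  have "inj_on (\<lambda>(c,h). of_nat c * a + h) ({..<?p} \<times> H)"
  proof (rule inj_onI, clarify)
    fix c h c' h' assume *: "c < ?p" "h \<in> H" "c' < ?p" "h' \<in> H" "of_nat c * a + h = (of_nat c' * a + h' :: 'c)"
    show "c = c' \<and> h = h'"
    proof (cases "c = c'")
      case True thus ?thesis using * by simp
    next
      case False
      show ?thesis
      proof (cases "c' < c")
        case True thus ?thesis using addsub_ext_inj[OF H aH True *(1) *(2,4,5)] by simp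
      next
        case False
        hence cc': "c < c'" using \<open>c \<noteq> c'\<close> by simp
        show ?thesis using addsub_ext_inj[OF H aH cc' *(3) *(4,2)] *(5) by simp
      qed
    qed
  qed
  hence "card H' = card ({..<?p} \<times> H)" unfolding H'_def by (rule card_image)
  thus "card H' = ?p * card H" by (simp add: card_cartesian_product)
qed

lemma fin_field_card_pow: "\<exists>k. card (UNIV :: 'c :: {finite,field} set) = CHAR('c) ^ k"
proof -
  let ?p = "CHAR('c)"
  have p2: "?p \<ge> 2" using fin_field_prime_char[where 'c='c] prime_ge_2_nat by blast
  define K where "K = {k. \<exists>H::'c set. addsub H \<and> card H = ?p ^ k}"
  have bound: "k < card (UNIV :: 'c set)" if kK: "k \<in> K" for k
  proof -
    obtain H :: "'c set" where "card H = ?p ^ k" using kK unfolding K_def by auto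
    hence "?p ^ k \<le> card (UNIV :: 'c set)" by (metis card_mono finite_UNIV subset_UNIV)
    moreover have "k < ?p ^ k" using less_exp[of k] power_mono[OF p2, of k] by linarith
    ultimately show ?thesis by linarith
  qed
  have finK: "finite K" using bound by (meson finite_nat_set_iff_bounded)
  have "0 \<in> K" unfolding K_def by (intro CollectI exI[of _ "{0}"]) (simp add: addsub_def)
  define k0 where "k0 = Max K"
  have "k0 \<in> K" unfolding k0_def using finK \<open>0 \<in> K\<close> by (intro Max_in) auto
  then obtain H :: "'c set" where H: "addsub H" "card H = ?p ^ k0" unfolding K_def by auto
  show ?thesis
  proof (cases "H = UNIV")
    case True thus ?thesis using H by auto
  next
    case False
    then obtain a where a: "a \<notin> H" by auto
    from addsub_ext[OF H(1) a] have "Suc k0 \<in> K" unfolding K_def using H(2) by (intro CollectI) auto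
    hence "Suc k0 \<le> k0" unfolding k0_def using finK by simp
    thus ?thesis by simp
  qed
qed

lemma emb_add: "field_emb e \<Longrightarrow> e (x + y) = e x + e y" by (simp add: field_emb_def)
lemma emb_mult: "field_emb e \<Longrightarrow> e (x * y) = e x * e y" by (simp add: field_emb_def)
lemma emb_one: "field_emb e \<Longrightarrow> e 1 = 1" by (simp add: field_emb_def)
lemma emb_zero: "field_emb e \<Longrightarrow> e 0 = 0"
  using emb_add[of e 0 0] by (metis add.right_neutral add_left_cancel)
lemma emb_neg: "field_emb e \<Longrightarrow> e (- x) = - e x"
  using emb_add[of e x "-x"] emb_zero[of e] by (simp add: add_eq_0_iff)
lemma emb_diff: "field_emb e \<Longrightarrow> e (x - y) = e x - e y"
  using emb_add[of e x "-y"] emb_neg[of e y] by simp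
lemma emb_pow: "field_emb e \<Longrightarrow> e (x ^ k) = e x ^ k"
  by (induction k) (simp_all add: emb_one emb_mult)
lemma emb_sum: "field_emb e \<Longrightarrow> e (sum f A) = (\<Sum>x\<in>A. e (f x))"
  by (induction A rule: infinite_finite_induct) (simp_all add: emb_zero emb_add)
lemma emb_of_nat: "field_emb (e :: 'a::field \<Rightarrow> 'b::field) \<Longrightarrow> e (of_nat k) = of_nat k"
  by (induction k) (simp_all add: emb_zero emb_add emb_one)
lemma emb_inj:
  fixes e :: "'a::field \<Rightarrow> 'b::field"
  assumes "field_emb e" shows "inj e"
proof (rule injI, rule ccontr)
  fix x y assume eq: "e x = e y" and ne: "x \<noteq> y"
  have "1 = e ((x - y) * inverse (x - y))" using ne emb_one[OF assms] by simp
  also have "\<dots> = 0" using eq by (simp add: emb_mult[OF assms] emb_diff[OF assms])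
  finally show False by simp
qed

lemma emb_CHAR:
  fixes e :: "'a::field \<Rightarrow> 'b::field"
  assumes "field_emb e" shows "CHAR('b) = CHAR('a)"
proof (rule CHAR_eqI)
  show "of_nat CHAR('a) = (0::'b)" using emb_of_nat[OF assms, of "CHAR('a)"] emb_zero[OF assms] by simp
  fix x assume "of_nat x = (0::'b)"
  hence "e (of_nat x) = e 0" using emb_of_nat[OF assms, of x] emb_zero[OF assms] by simp
  hence "(of_nat x :: 'a) = 0" using emb_inj[OF assms] by (simp add: inj_eq)
  thus "CHAR('a) dvd x" by (simp add: of_nat_eq_0_iff_char_dvd)
qed

locale bch_setup =
  fixes e :: "'a::{finite,field} \<Rightarrow> 'b::{finite,field}"
    and \<alpha> :: 'b and q m n :: nat
  assumes q_def: "q = card (UNIV :: 'a set)"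
    and m2: "m \<ge> 2"
    and cardb: "card (UNIV :: 'b set) = q ^ m"
    and emb: "field_emb e"
    and prim: "primitive_elem \<alpha>"
    and n_def: "n = q ^ m - 1"
begin

lemma q2: "q \<ge> 2"
proof -
  have "{0::'a, 1} \<subseteq> UNIV" by simp
  hence "card {0::'a, 1} \<le> q" unfolding q_def by (intro card_mono) auto
  thus ?thesis by simp
qed

lemma n_pos: "n > 0"
proof -
  have "q^m \<ge> q^1" using q2 m2 by (intro power_increasing) auto
  thus ?thesis using q2 n_def by simp
qed

lemma qm_eq: "q^m = n + 1" using n_pos n_def by simp

lemma frob_ex: "\<exists>k. q = CHAR('b) ^ k"
  using fin_field_card_pow[where 'c='a] emb_CHAR[OF emb] q_def by simp

lemma frob_add: "(x + y :: 'b) ^ (q^j) = x ^ (q^j) + y ^ (q^j)"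
proof -
  obtain k where k: "q = CHAR('b) ^ k" using frob_ex by blast
  show ?thesis
    by (rule freshmans_dream'[OF fin_field_prime_char, of _ "k*j"]) (simp add: k power_mult)
qed

lemma frob_sum: "(sum f A :: 'b) ^ (q^j) = (\<Sum>x\<in>A. f x ^ (q^j))"
proof -
  obtain k where k: "q = CHAR('b) ^ k" using frob_ex by blast
  show ?thesis
    by (rule freshmans_dream_sum'[OF fin_field_prime_char, of _ "k*j"]) (simp add: k power_mult)
qed

lemma ea_pow: "e a ^ (q^j) = e a"
proof (induction j)
  case (Suc j)
  have "e a ^ (q ^ Suc j) = (e a ^ (q^j)) ^ q" by (simp add: power_mult[symmetric] mult.commute)
  also have "\<dots> = e (a ^ q)" using Suc by (simp add: emb_pow[OF emb])
  also have "a ^ q = a" unfolding q_def by (rule fin_field_pow_card)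
  finally show ?case .
qed simp

lemma b_pow: "(x::'b) ^ (q^m) = x" using fin_field_pow_card[of x] cardb by simp

definition tr :: "'b \<Rightarrow> 'b" where "tr x = (\<Sum>j<m. x ^ (q^j))"

lemma tr_add: "tr (x + y) = tr x + tr y"
  unfolding tr_def by (simp add: frob_add sum.distrib)

lemma tr_scal: "tr (e a * x) = e a * tr x"
  unfolding tr_def by (simp add: power_mult_distrib ea_pow sum_distrib_left)

lemma tr0: "tr 0 = 0"
  unfolding tr_def using q2 by (simp add: power_0_left)

lemma tr_sum: "tr (sum f A) = (\<Sum>x\<in>A. tr (f x))"
  by (induction A rule: infinite_finite_induct) (simp_all add: tr_add tr0)

lemma tr_pow: "tr x ^ q = tr x"
proof -
  have "tr x ^ q = tr x ^ (q^1)" by simp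
  also have "\<dots> = (\<Sum>j<m. x ^ (q^Suc j))" unfolding tr_def frob_sum
    by (simp add: power_mult[symmetric] mult.commute)
  also have "\<dots> = tr x"
  proof -
    have "(\<Sum>j<Suc m. x ^ (q^j)) = (\<Sum>j<m. x ^ (q^j)) + x ^ (q^m)" by simp
    moreover have "(\<Sum>j<Suc m. x ^ (q^j)) = x ^ (q^0) + (\<Sum>j<m. x ^ (q^Suc j))"
      by (rule sum.lessThan_Suc_shift)
    ultimately show ?thesis unfolding tr_def using b_pow[of x] by (simp add: add.commute)
  qed
  finally show ?thesis .
qed

lemma fixed_in_range: assumes "(y::'b) ^ q = y" shows "y \<in> range e"
proof -
  define P :: "'b poly" where "P = monom 1 q - [:0, 1:]"
  have polyP: "poly P x = x ^ q - x" for x unfolding P_def by (simp add: poly_monom)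
  have "coeff [:0,1::'b:] q = 0" using q2 by (intro coeff_eq_0) simp
  hence "coeff P q = 1" unfolding P_def by (simp add: coeff_monom)
  hence P0: "P \<noteq> 0" by auto
  have "degree P \<le> q" unfolding P_def using q2
    by (intro order.trans[OF degree_diff_le_max]) (auto simp: degree_monom_le)
  hence cardR: "card {x. poly P x = 0} \<le> q" using card_poly_roots_bound[OF P0] by linarith
  have sub: "range e \<subseteq> {x. poly P x = 0}" using ea_pow[of _ 1] by (auto simp: polyP)
  have "card (range e) = q" unfolding q_def using emb_inj[OF emb] by (simp add: card_image)
  moreover have "card (range e) \<le> card {x. poly P x = 0}" using sub by (intro card_mono) auto
  ultimately have "card (range e) = card {x. poly P x = 0}" using cardR by linarith
  hence "range e = {x. poly P x = 0}" using sub by (intro card_subset_eq) auto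
  thus ?thesis using assms polyP by auto
qed

lemma tr_range: "tr x \<in> range e"
  by (rule fixed_in_range[OF tr_pow])

lemma tr_nonzero: "\<exists>b. tr b \<noteq> 0"
proof (rule ccontr)
  assume "\<not> ?thesis"
  hence allz: "tr b = 0" for b by simp
  define P :: "'b poly" where "P = (\<Sum>j<m. monom 1 (q^j))"
  have polyP: "poly P x = tr x" for x unfolding P_def tr_def by (simp add: poly_sum poly_monom)
  have "coeff P 1 = (\<Sum>j<m. coeff (monom (1::'b) (q^j)) 1)" unfolding P_def by (rule coeff_sum)
  also have "\<dots> = (\<Sum>j<m. if j = 0 then 1 else 0)"
  proof (rule sum.cong)
    fix j show "coeff (monom (1::'b) (q^j)) 1 = (if j = 0 then 1 else 0)"
    proof (cases "j = 0")
      case False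
      hence "q^j \<ge> q^1" using q2 by (intro power_increasing) auto
      hence "q^j \<noteq> 1" using q2 False by simp
      thus ?thesis using False by (simp add: coeff_monom)
    qed simp
  qed simp
  also have "\<dots> = 1" using m2 by simp
  finally have "coeff P 1 = 1" .
  hence P0: "P \<noteq> 0" by auto
  have "degree P \<le> q^(m-1)" unfolding P_def
    by (intro degree_sum_le order.trans[OF degree_monom_le] power_increasing) (use q2 in auto)
  also have "\<dots> < q^m" using q2 m2 by (intro power_strict_increasing) auto
  finally have "degree P < q^m" .
  moreover have "card {x. poly P x = 0} = q^m" using allz cardb by (simp add: polyP)
  ultimately show False using card_poly_roots_bound[OF P0] by linarith
qed

lemma alpha_nz: "\<alpha> \<noteq> 0" using prim by (simp add: primitive_elem_def)

lemma alpha_n: "\<alpha> ^ n = 1"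
proof -
  have "\<alpha> ^ n * \<alpha> = \<alpha>" using b_pow[of \<alpha>] qm_eq by (simp add: power_add mult.commute)
  thus ?thesis using alpha_nz by simp
qed

lemma alpha_pow_mod: "\<alpha> ^ t = \<alpha> ^ (t mod n)"
proof -
  have "\<alpha> ^ t = \<alpha> ^ (n * (t div n) + t mod n)" by simp
  also have "\<dots> = (\<alpha>^n)^(t div n) * \<alpha> ^ (t mod n)" by (simp only: power_add power_mult)
  finally show ?thesis using alpha_n by simp
qed

lemma alpha_inj: "inj_on (\<lambda>i. \<alpha> ^ i) {..<n}"
proof (rule eq_card_imp_inj_on)
  have "(\<lambda>i. \<alpha> ^ i) ` {..<n} = UNIV - {0}"
  proof
    show "(\<lambda>i. \<alpha> ^ i) ` {..<n} \<subseteq> UNIV - {0}" using alpha_nz by auto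
    show "UNIV - {0} \<subseteq> (\<lambda>i. \<alpha> ^ i) ` {..<n}"
    proof
      fix x assume "x \<in> (UNIV :: 'b set) - {0}"
      then obtain k where "\<alpha> ^ k = x" using prim unfolding primitive_elem_def by auto
      hence "x = \<alpha> ^ (k mod n)" using alpha_pow_mod by simp
      moreover have "k mod n < n" using n_pos by simp
      ultimately show "x \<in> (\<lambda>i. \<alpha> ^ i) ` {..<n}" by auto
    qed
  qed
  moreover have "card ((UNIV :: 'b set) - {0}) = n" using cardb n_def by (simp add: card_Diff_singleton)
  ultimately show "card ((\<lambda>i. \<alpha> ^ i) ` {..<n}) = card {..<n}" by simp
qed simp

lemma alpha_pow_eq_1: "\<alpha> ^ t = 1 \<longleftrightarrow> n dvd t"
proof
  assume "\<alpha> ^ t = 1"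
  hence "\<alpha> ^ (t mod n) = \<alpha> ^ 0" using alpha_pow_mod by simp
  hence "t mod n = 0" using inj_onD[OF alpha_inj, of "t mod n" 0] n_pos by simp
  thus "n dvd t" by auto
next
  assume "n dvd t"
  thus "\<alpha> ^ t = 1" using alpha_pow_mod[of t] by simp
qed

end

lemma poly_Poly_map_upt:
  fixes f :: "nat \<Rightarrow> 'c::comm_semiring_1"
  shows "poly (Poly (map f [0..<n])) x = (\<Sum>i<n. f i * x ^ i)"
proof (induction n)
  case (Suc n)
  have "Poly (map f [0..<Suc n]) = Poly (map f [0..<n] @ [f n])" by simp
  also have "\<dots> = Poly (map f [0..<n]) + monom 1 (length (map f [0..<n])) * Poly [f n]" by (rule Poly_append)
  finally show ?case using Suc by (simp add: poly_monom mult.commute)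
qed simp

lemma prod_roots_dvd:
  fixes f :: "'x \<Rightarrow> 'c::field"
  assumes "finite A" "inj_on f A" "\<And>a. a \<in> A \<Longrightarrow> poly P (f a) = 0"
  shows "(\<Prod>a\<in>A. [:- f a, 1:]) dvd P"
  using assms
proof (induction A rule: finite_induct)
  case (insert a A)
  have "(\<Prod>a\<in>A. [:- f a, 1:]) dvd P" using insert by (auto intro: inj_on_subset)
  then obtain R where R: "P = (\<Prod>a\<in>A. [:- f a, 1:]) * R" by (auto elim: dvdE)
  have "poly (\<Prod>a\<in>A. [:- f a, 1:]) (f a) = (\<Prod>a'\<in>A. f a - f a')" by (simp add: poly_prod)
  also have "\<dots> \<noteq> 0"
  proof -
    have "f a \<noteq> f a'" if "a' \<in> A" for a'
      using inj_onD[OF insert(4), of a a'] insert(2) that by auto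
    thus ?thesis using insert(1) by (simp add: prod_zero_iff)
  qed
  finally have nz: "poly (\<Prod>a\<in>A. [:- f a, 1:]) (f a) \<noteq> 0" .
  have "poly P (f a) = 0" using insert by simp
  hence "poly R (f a) = 0" using nz R by simp
  hence "[:- f a, 1:] dvd R" by (simp add: poly_eq_0_iff_dvd)
  hence "[:- f a, 1:] * (\<Prod>a\<in>A. [:- f a, 1:]) dvd (\<Prod>a\<in>A. [:- f a, 1:]) * R"
    by (metis mult.commute mult_dvd_mono dvd_refl)
  moreover have "(\<Prod>a\<in>insert a A. [:- f a, 1:]) = [:- f a, 1:] * (\<Prod>a\<in>A. [:- f a, 1:])"
    using insert(1,2) by (rule prod.insert)
  ultimately show ?case using R by metis
qed simp

context bch_setup
begin

lemma poly_vec: "poly (vec_poly e n c) x = (\<Sum>i<n. e (c i) * x ^ i)"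
  unfolding vec_poly_def by (rule poly_Poly_map_upt)

lemma geom_zero:
  fixes \<beta> :: 'b
  assumes "\<beta> ^ n = 1" "\<beta> \<noteq> 1" shows "(\<Sum>i<n. \<beta> ^ i) = 0"
  using geometric_sum[OF assms(2), of n] assms(1) by simp

definition cw :: "'b \<Rightarrow> nat \<Rightarrow> nat \<Rightarrow> 'a" where
  "cw b s i = (if i < n then inv e (tr (b * \<alpha> ^ (i * s))) else 0)"

lemma e_cw: "i < n \<Longrightarrow> e (cw b s i) = tr (b * \<alpha> ^ (i * s))"
  unfolding cw_def using tr_range by (simp add: f_inv_into_f)

lemma cw_eval_zero:
  assumes nd: "\<And>j. \<not> n dvd (s * q^j + z)"
  shows "poly (vec_poly e n (cw b s)) (\<alpha> ^ z) = 0"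
proof -
  have "poly (vec_poly e n (cw b s)) (\<alpha> ^ z) = (\<Sum>i<n. tr (b * \<alpha> ^ (i * s)) * (\<alpha> ^ z) ^ i)"
    unfolding poly_vec by (intro sum.cong) (simp_all add: e_cw)
  also have "\<dots> = (\<Sum>i<n. \<Sum>j<m. b ^ (q^j) * (\<alpha> ^ (s * q^j + z)) ^ i)"
  proof (intro sum.cong refl)
    fix i
    have "tr (b * \<alpha> ^ (i * s)) * (\<alpha> ^ z) ^ i = (\<Sum>j<m. (b * \<alpha> ^ (i * s)) ^ (q^j) * (\<alpha> ^ z) ^ i)"
      unfolding tr_def by (simp add: sum_distrib_right)
    also have "\<dots> = (\<Sum>j<m. b ^ (q^j) * (\<alpha> ^ (s * q^j + z)) ^ i)"
    proof (intro sum.cong refl)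
      fix j
      have ex: "i * s * q^j + z * i = (s * q^j + z) * i" by (simp add: algebra_simps)
      have "(b * \<alpha> ^ (i * s)) ^ (q^j) * (\<alpha> ^ z) ^ i = b ^ (q^j) * (\<alpha> ^ (i * s * q^j + z * i))"
        by (simp add: power_mult_distrib power_add flip: power_mult)
      also have "\<dots> = b ^ (q^j) * (\<alpha> ^ (s * q^j + z)) ^ i" unfolding ex by (simp add: power_mult)
      finally show "(b * \<alpha> ^ (i * s)) ^ (q^j) * (\<alpha> ^ z) ^ i = b ^ (q^j) * (\<alpha> ^ (s * q^j + z)) ^ i" .
    qed
    finally show "tr (b * \<alpha> ^ (i * s)) * (\<alpha> ^ z) ^ i = (\<Sum>j<m. b ^ (q^j) * (\<alpha> ^ (s * q^j + z)) ^ i)" .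
  qed
  also have "\<dots> = (\<Sum>j<m. b ^ (q^j) * (\<Sum>i<n. (\<alpha> ^ (s * q^j + z)) ^ i))"
    by (subst sum.swap) (simp add: sum_distrib_left)
  also have "\<dots> = 0"
  proof (intro sum.neutral ballI)
    fix j
    have "(\<alpha> ^ (s * q^j + z)) ^ n = 1" by (simp flip: power_mult add: mult.commute[of _ n] power_mult alpha_n)
    moreover have "\<alpha> ^ (s * q^j + z) \<noteq> 1" using nd[of j] by (simp add: alpha_pow_eq_1)
    ultimately show "b ^ (q^j) * (\<Sum>i<n. (\<alpha> ^ (s * q^j + z)) ^ i) = 0" by (simp add: geom_zero)
  qed
  finally show ?thesis .
qed

lemma cw_in_code:
  assumes d: "\<delta> \<le> delta_max q m" and s: "s < delta_max q m"
  shows "cw b s \<in> bch_code e q \<alpha> n \<delta>"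
proof -
  define Z where "Z = (\<Union>i\<in>{1..\<delta>-1}. cyc_coset q n i)"
  have Zn: "Z \<subseteq> {..<n}" unfolding Z_def cyc_coset_def using n_pos by auto
  have "bch_gen q \<alpha> n \<delta> dvd vec_poly e n (cw b s)"
    unfolding bch_gen_def Z_def[symmetric]
  proof (rule prod_roots_dvd)
    show "finite Z" using Zn finite_subset by blast
    show "inj_on (\<lambda>z. \<alpha> ^ z) Z" using alpha_inj Zn by (rule inj_on_subset)
    fix z assume "z \<in> Z"
    then obtain i l where il: "1 \<le> i" "i \<le> \<delta> - 1" "z = i * q^l mod n"
      unfolding Z_def cyc_coset_def by auto
    have "i < delta_max q m" using il d by linarith
    hence "\<not> n dvd (s * q^j + z)" for j
      using nt_coset[OF q2 m2 s il(1), of j l] il(3) n_def by simp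
    thus "poly (vec_poly e n (cw b s)) (\<alpha> ^ z) = 0" by (rule cw_eval_zero)
  qed
  moreover have "cw b s \<in> vecs n" unfolding vecs_def cw_def by simp
  ultimately show ?thesis unfolding bch_code_def by simp
qed

lemma dual_vanish:
  assumes y: "y \<in> dual_code n (bch_code e q \<alpha> n \<delta>)"
    and d: "\<delta> \<le> delta_max q m" and s: "s < delta_max q m"
  shows "(\<Sum>i<n. e (y i) * \<alpha> ^ (i * s)) = 0"
proof (rule ccontr)
  define W where "W = (\<Sum>i<n. e (y i) * \<alpha> ^ (i * s))"
  assume "\<not> ?thesis"
  hence W0: "W \<noteq> 0" unfolding W_def .
  obtain b0 where b0: "tr b0 \<noteq> 0" using tr_nonzero by blast
  define b where "b = b0 / W"
  have "cw b s \<in> bch_code e q \<alpha> n \<delta>" by (rule cw_in_code[OF d s])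
  hence "(\<Sum>i<n. cw b s i * y i) = 0" using y unfolding dual_code_def by blast
  hence "e (\<Sum>i<n. cw b s i * y i) = 0" using emb_zero[OF emb] by simp
  hence "(\<Sum>i<n. tr (b * \<alpha> ^ (i * s)) * e (y i)) = 0"
    by (simp add: emb_sum[OF emb] emb_mult[OF emb] e_cw)
  moreover have "(\<Sum>i<n. tr (b * \<alpha> ^ (i * s)) * e (y i)) = tr (b * W)"
  proof -
    have "(\<Sum>i<n. tr (b * \<alpha> ^ (i * s)) * e (y i)) = (\<Sum>i<n. tr (e (y i) * (b * \<alpha> ^ (i * s))))"
      by (intro sum.cong refl) (simp add: tr_scal mult.commute)
    also have "\<dots> = tr (\<Sum>i<n. e (y i) * (b * \<alpha> ^ (i * s)))" by (simp add: tr_sum)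
    also have "(\<Sum>i<n. e (y i) * (b * \<alpha> ^ (i * s))) = b * W"
      unfolding W_def by (simp add: sum_distrib_left mult_ac)
    finally show ?thesis .
  qed
  moreover have "b * W = b0" unfolding b_def using W0 by simp
  ultimately show False using b0 by simp
qed

lemma bch_bound:
  fixes u :: "nat \<Rightarrow> 'b" and D :: nat
  assumes van: "\<And>s. s < D \<Longrightarrow> (\<Sum>i<n. u i * \<alpha> ^ (i * s)) = 0"
    and ne: "{i. i < n \<and> u i \<noteq> 0} \<noteq> {}"
  shows "card {i. i < n \<and> u i \<noteq> 0} \<ge> D + 1"
proof (rule ccontr)
  define S where "S = {i. i < n \<and> u i \<noteq> 0}"
  assume "\<not> ?thesis"
  hence cS: "card S \<le> D" unfolding S_def by simp
  obtain i0 where i0: "i0 \<in> S" using ne S_def by auto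
  have finS: "finite S" unfolding S_def by simp
  define L where "L = (\<Prod>i\<in>S - {i0}. [:- (\<alpha> ^ i), 1:])"
  have "degree L = (\<Sum>i\<in>S - {i0}. degree [:- (\<alpha> ^ i), 1::'b:])"
    unfolding L_def by (rule degree_prod_sum_eq) simp
  also have "\<dots> = card (S - {i0})" by simp
  also have "\<dots> < D" using cS i0 finS by (simp add: card_Diff_singleton) (metis One_nat_def card_gt_0_iff diff_less empty_iff less_le_trans zero_less_one)
  finally have dL: "degree L < D" .
  have "(\<Sum>i<n. u i * poly L (\<alpha> ^ i)) = (\<Sum>i<n. \<Sum>k\<le>degree L. coeff L k * (u i * \<alpha> ^ (i * k)))"
    by (simp add: poly_altdef sum_distrib_left mult_ac power_mult)
  also have "\<dots> = (\<Sum>k\<le>degree L. coeff L k * (\<Sum>i<n. u i * \<alpha> ^ (i * k)))"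
    by (subst sum.swap) (simp add: sum_distrib_left)
  also have "\<dots> = 0" using dL by (intro sum.neutral ballI) (simp add: van)
  finally have z1: "(\<Sum>i<n. u i * poly L (\<alpha> ^ i)) = 0" .
  have "(\<Sum>i<n. u i * poly L (\<alpha> ^ i)) = (\<Sum>i\<in>{i0}. u i * poly L (\<alpha> ^ i))"
  proof (rule sum.mono_neutral_right)
    show "{i0} \<subseteq> {..<n}" using i0 S_def by auto
    show "\<forall>i\<in>{..<n} - {i0}. u i * poly L (\<alpha> ^ i) = 0"
    proof
      fix i assume i: "i \<in> {..<n} - {i0}"
      show "u i * poly L (\<alpha> ^ i) = 0"
      proof (cases "i \<in> S")
        case True
        hence "poly L (\<alpha> ^ i) = 0" unfolding L_def poly_prod using i finS
          by (auto simp: prod_zero_iff)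
        thus ?thesis by simp
      next
        case False thus ?thesis using i S_def by auto
      qed
    qed
  qed simp
  hence "u i0 * poly L (\<alpha> ^ i0) = 0" using z1 by simp
  moreover have "u i0 \<noteq> 0" using i0 S_def by simp
  moreover have "poly L (\<alpha> ^ i0) \<noteq> 0"
  proof -
    have "\<alpha> ^ i0 \<noteq> \<alpha> ^ i" if "i \<in> S - {i0}" for i
      using that i0 S_def inj_onD[OF alpha_inj, of i0 i] by auto
    thus ?thesis unfolding L_def poly_prod using finS by (simp add: prod_zero_iff)
  qed
  ultimately show False by simp
qed

end

theorem mainTheorem8:
  fixes e :: "'a::{finite,field} \<Rightarrow> 'b::{finite,field}"
    and \<alpha> :: 'b and q m n \<delta> :: nat
  assumes "q = card (UNIV :: 'a set)"
    and "m \<ge> 2"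
    and "card (UNIV :: 'b set) = q ^ m"
    and "field_emb e"
    and "primitive_elem \<alpha>"
    and "n = q ^ m - 1"
    and "2 \<le> \<delta>" and "\<delta> \<le> delta_max q m"
  shows "min_dist_ge n (dual_code n (bch_code e q \<alpha> n \<delta>)) (delta_max q m + 1)"
proof -
  interpret bch_setup e \<alpha> q m n using assms(1-6) by unfold_locales
  show ?thesis unfolding min_dist_ge_def
  proof (intro ballI impI)
    fix x y assume x: "x \<in> dual_code n (bch_code e q \<alpha> n \<delta>)"
      and y: "y \<in> dual_code n (bch_code e q \<alpha> n \<delta>)" and xy: "x \<noteq> y"
    define u where "u i = e (x i) - e (y i)" for i
    have van: "(\<Sum>i<n. u i * \<alpha> ^ (i * s)) = 0" if "s < delta_max q m" for s
    proof -
      have "(\<Sum>i<n. u i * \<alpha> ^ (i * s)) = (\<Sum>i<n. e (x i) * \<alpha> ^ (i * s)) - (\<Sum>i<n. e (y i) * \<alpha> ^ (i * s))"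
        unfolding u_def by (simp add: left_diff_distrib sum_subtractf)
      thus ?thesis using dual_vanish[OF x assms(8) that] dual_vanish[OF y assms(8) that] by simp
    qed
    have S: "{i. i < n \<and> u i \<noteq> 0} = {i \<in> {0..<n}. x i \<noteq> y i}"
      using emb_inj[OF emb] by (auto simp: u_def inj_eq)
    have "{i \<in> {0..<n}. x i \<noteq> y i} \<noteq> {}"
    proof
      assume none: "{i \<in> {0..<n}. x i \<noteq> y i} = {}"
      have "x i = y i" for i
      proof (cases "i < n")
        case True thus ?thesis using none by auto
      next
        case False thus ?thesis using x y unfolding dual_code_def vecs_def by auto
      qed
      thus False using xy by auto
    qed
    hence "card {i. i < n \<and> u i \<noteq> 0} \<ge> delta_max q m + 1"
      by (intro bch_bound van) (simp_all add: S)
    thus "hamming_dist n x y \<ge> delta_max q m + 1" unfolding hamming_dist_def S .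
  qed
qed

end
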